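(* Let $\Sigma$ be a complete rational polyhedral fan in $\mathbb{R}^n$ with primitive ray generators $u_1,\ldots,u_k$, with base locus $Z\subset\mathbb{C}^k$ and group $G\subset(\mathbb{C}^* )^k$ of the Cox construction (see context). For $z\in\mathbb{C}^k\setminus Z$, let $\overline{G\cdot z}\subset\mathbb{P}^k$ denote the Zariski closure of $\{(1:y_1:\cdots:y_k)\mid (y_1,\ldots,y_k)\in G\cdot z\}$. Then the dimension and the degree of the projective variety $\overline{G\cdot z}$ depend only on which $(\mathbb{C}^* )^k$-orbit $z$ belongs to; equivalently, they depend only on the index set $\mathscr I=\{i\mid z_i\neq 0\}$.
   Context: $F=[u_1~\cdots~u_k]\in\mathbb{Z}^{n\times k}$. The base locus is $Z=V_{\mathbb{C}^k}(B)$ where $B\subset\mathbb{C}[x_1,\ldots,x_k]$ is generated by the monomials $\prod_{i:\rho_i\not\subset\sigma}x_i$, $\sigma$ ranging over the $n$-dimensional cones of $\Sigma$ ($\rho_i$ the ray generated by $u_i$). $G=\{g\in(\mathbb{C}^* )^k\mid \prod_{j}g_j^{F_{i,j}}=1,\ i=1,\ldots,n\}$ acts on $\mathbb{C}^k\setminus Z$ by coordinatewise multiplication, $g\cdot z=(g_1z_1,\ldots,g_kz_k)$. *)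

theory Defs
  imports "HOL-Analysis.Analysis"
begin

definition rvec :: "int^'n \<Rightarrow> real^'n" where
  "rvec w = (\<chi> i. real_of_int (w $ i))"

definition lat_cone_hull :: "(int^'n) set \<Rightarrow> (real^'n) set" where
  "lat_cone_hull V = {x. \<exists>c. (\<forall>v\<in>V. 0 \<le> c v) \<and> x = (\<Sum>v\<in>V. c v *\<^sub>R rvec v)}"

definition rational_polyhedral_cone :: "(real^'n) set \<Rightarrow> bool" where
  "rational_polyhedral_cone \<sigma> \<longleftrightarrow> (\<exists>V. finite V \<and> \<sigma> = lat_cone_hull V)"

definition strongly_convex :: "(real^'n) set \<Rightarrow> bool" where
  "strongly_convex \<sigma> \<longleftrightarrow> \<sigma> \<inter> uminus ` \<sigma> = {0}"

definition rational_fan :: "(real^'n) set set \<Rightarrow> bool" where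
  "rational_fan \<Sigma> \<longleftrightarrow> finite \<Sigma> \<and>
     (\<forall>\<sigma>\<in>\<Sigma>. rational_polyhedral_cone \<sigma> \<and> strongly_convex \<sigma>) \<and>
     (\<forall>\<sigma>\<in>\<Sigma>. \<forall>\<tau>. \<tau> face_of \<sigma> \<and> \<tau> \<noteq> {} \<longrightarrow> \<tau> \<in> \<Sigma>) \<and>
     (\<forall>\<sigma>\<in>\<Sigma>. \<forall>\<tau>\<in>\<Sigma>. (\<sigma> \<inter> \<tau>) face_of \<sigma> \<and> (\<sigma> \<inter> \<tau>) face_of \<tau>)"

definition complete_fan :: "(real^'n) set set \<Rightarrow> bool" where
  "complete_fan \<Sigma> \<longleftrightarrow> rational_fan \<Sigma> \<and> \<Union>\<Sigma> = UNIV"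

definition ray_of :: "int^'n \<Rightarrow> (real^'n) set" where
  "ray_of w = {t *\<^sub>R rvec w | t. 0 \<le> t}"

definition primitive_lattice_vec :: "int^'n \<Rightarrow> bool" where
  "primitive_lattice_vec w \<longleftrightarrow> w \<noteq> 0 \<and>
     (\<forall>v::int^'n. \<forall>m::int. 0 < m \<and> w = (\<chi> i. m * v $ i) \<longrightarrow> m = 1)"

definition ray_generators :: "(real^'n) set set \<Rightarrow> nat \<Rightarrow> (nat \<Rightarrow> int^'n) \<Rightarrow> bool" where
  "ray_generators \<Sigma> k u \<longleftrightarrow> inj_on u {1..k} \<and>
     (\<forall>i\<in>{1..k}. primitive_lattice_vec (u i)) \<and>
     {\<sigma>\<in>\<Sigma>. dim \<sigma> = 1} = (\<lambda>i. ray_of (u i)) ` {1..k}"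

text \<open>Points of C^k are functions nat => complex supported on {1..k}.\<close>
definition cspace :: "nat \<Rightarrow> (nat \<Rightarrow> complex) set" where
  "cspace k = {z. \<forall>i. i \<notin> {1..k} \<longrightarrow> z i = 0}"

text \<open>Base locus Z = V(B): common zeros of the monomials prod_{rho_i not in sigma} x_i,
  sigma ranging over the n-dimensional cones.\<close>
definition base_locus :: "(real^'n) set set \<Rightarrow> nat \<Rightarrow> (nat \<Rightarrow> int^'n) \<Rightarrow> (nat \<Rightarrow> complex) set" where
  "base_locus \<Sigma> k u = {z \<in> cspace k. \<forall>\<sigma>\<in>\<Sigma>. dim \<sigma> = CARD('n) \<longrightarrow>
       (\<Prod>i\<in>{i\<in>{1..k}. \<not> ray_of (u i) \<subseteq> \<sigma>}. z i) = 0}"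

definition cox_group :: "nat \<Rightarrow> (nat \<Rightarrow> int^'n) \<Rightarrow> (nat \<Rightarrow> complex) set" where
  "cox_group k u = {g. (\<forall>i. i \<notin> {1..k} \<longrightarrow> g i = 1) \<and> (\<forall>j\<in>{1..k}. g j \<noteq> 0) \<and>
       (\<forall>r::'n. (\<Prod>j\<in>{1..k}. g j powi (u j $ r)) = 1)}"

definition torus :: "nat \<Rightarrow> (nat \<Rightarrow> complex) set" where
  "torus k = {g. (\<forall>i. i \<notin> {1..k} \<longrightarrow> g i = 1) \<and> (\<forall>j\<in>{1..k}. g j \<noteq> 0)}"

definition act :: "(nat \<Rightarrow> complex) \<Rightarrow> (nat \<Rightarrow> complex) \<Rightarrow> (nat \<Rightarrow> complex)" where
  "act g z = (\<lambda>i. g i * z i)"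

definition cox_orbit :: "nat \<Rightarrow> (nat \<Rightarrow> int^'n) \<Rightarrow> (nat \<Rightarrow> complex) \<Rightarrow> (nat \<Rightarrow> complex) set" where
  "cox_orbit k u z = (\<lambda>g. act g z) ` cox_group k u"

text \<open>A subset of P^k is represented by its affine cone minus the origin: a set of
  nonzero vectors x : nat => complex supported on {0..k}.\<close>
definition pspace :: "nat \<Rightarrow> (nat \<Rightarrow> complex) set" where
  "pspace k = {x. (\<forall>i>k. x i = 0) \<and> (\<exists>i\<le>k. x i \<noteq> 0)}"

definition monomials :: "nat \<Rightarrow> nat \<Rightarrow> (nat \<Rightarrow> nat) set" where
  "monomials k d = {\<alpha>. (\<forall>i>k. \<alpha> i = 0) \<and> (\<Sum>i\<le>k. \<alpha> i) = d}"

definition mono_eval :: "nat \<Rightarrow> (nat \<Rightarrow> nat) \<Rightarrow> (nat \<Rightarrow> complex) \<Rightarrow> complex" where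
  "mono_eval k \<alpha> x = (\<Prod>i\<le>k. x i ^ \<alpha> i)"

text \<open>Homogeneous polynomial of degree d in x_0..x_k, given by its coefficient function.\<close>
definition hom_poly :: "nat \<Rightarrow> nat \<Rightarrow> ((nat \<Rightarrow> nat) \<Rightarrow> complex) \<Rightarrow> bool" where
  "hom_poly k d p \<longleftrightarrow> finite {\<alpha>. p \<alpha> \<noteq> 0} \<and> {\<alpha>. p \<alpha> \<noteq> 0} \<subseteq> monomials k d"

definition poly_eval :: "nat \<Rightarrow> ((nat \<Rightarrow> nat) \<Rightarrow> complex) \<Rightarrow> (nat \<Rightarrow> complex) \<Rightarrow> complex" where
  "poly_eval k p x = (\<Sum>\<alpha>\<in>{\<alpha>. p \<alpha> \<noteq> 0}. p \<alpha> * mono_eval k \<alpha> x)"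

definition zariski_closed :: "nat \<Rightarrow> (nat \<Rightarrow> complex) set \<Rightarrow> bool" where
  "zariski_closed k X \<longleftrightarrow> (\<exists>P. (\<forall>p\<in>P. \<exists>d. hom_poly k d p) \<and>
      X = {x \<in> pspace k. \<forall>p\<in>P. poly_eval k p x = 0})"

definition zariski_closure :: "nat \<Rightarrow> (nat \<Rightarrow> complex) set \<Rightarrow> (nat \<Rightarrow> complex) set" where
  "zariski_closure k S = \<Inter>{X. zariski_closed k X \<and> S \<subseteq> X}"

definition zariski_irreducible :: "nat \<Rightarrow> (nat \<Rightarrow> complex) set \<Rightarrow> bool" where
  "zariski_irreducible k X \<longleftrightarrow> zariski_closed k X \<and> X \<noteq> {} \<and>
     (\<forall>A B. zariski_closed k A \<and> zariski_closed k B \<and> X = A \<union> B \<longrightarrow> X = A \<or> X = B)"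

definition proj_dim :: "nat \<Rightarrow> (nat \<Rightarrow> complex) set \<Rightarrow> nat" where
  "proj_dim k X = Sup {m. \<exists>C :: nat \<Rightarrow> (nat \<Rightarrow> complex) set.
       (\<forall>i\<le>m. zariski_irreducible k (C i)) \<and> (\<forall>i<m. C i \<subset> C (Suc i)) \<and> C m \<subseteq> X}"

text \<open>Hilbert function: dimension of the degree-d part of the homogeneous coordinate
  ring, i.e. the rank of the degree-d monomials as functions on (the cone over) X.\<close>
definition lin_indep_on :: "nat \<Rightarrow> (nat \<Rightarrow> complex) set \<Rightarrow> (nat \<Rightarrow> nat) set \<Rightarrow> bool" where
  "lin_indep_on k X M \<longleftrightarrow> (\<forall>c. (\<forall>x\<in>X. (\<Sum>\<alpha>\<in>M. c \<alpha> * mono_eval k \<alpha> x) = 0) \<longrightarrow> (\<forall>\<alpha>\<in>M. c \<alpha> = 0))"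

definition hilbert_function :: "nat \<Rightarrow> (nat \<Rightarrow> complex) set \<Rightarrow> nat \<Rightarrow> nat" where
  "hilbert_function k X d = Max {card M | M. M \<subseteq> monomials k d \<and> lin_indep_on k X M}"

text \<open>Degree: (dim X)! times the leading coefficient of the Hilbert polynomial.\<close>
definition proj_degree :: "nat \<Rightarrow> (nat \<Rightarrow> complex) set \<Rightarrow> real" where
  "proj_degree k X = fact (proj_dim k X) *
     lim (\<lambda>t. real (hilbert_function k X t) / real t ^ proj_dim k X)"

definition orbit_closure :: "nat \<Rightarrow> (nat \<Rightarrow> int^'n) \<Rightarrow> (nat \<Rightarrow> complex) \<Rightarrow> (nat \<Rightarrow> complex) set" where
  "orbit_closure k u z = zariski_closure k
     {x \<in> pspace k. \<exists>c y. c \<noteq> 0 \<and> y \<in> cox_orbit k u z \<and> x 0 = c \<and> (\<forall>i\<in>{1..k}. x i = c * y i)}"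

end

theory Submission
  imports Defs
begin

definition nz :: "(nat \<Rightarrow> complex) \<Rightarrow> bool" where
  "nz t \<longleftrightarrow> (\<forall>i. t i \<noteq> 0)"

definition tinv :: "(nat \<Rightarrow> complex) \<Rightarrow> (nat \<Rightarrow> complex)" where
  "tinv t = (\<lambda>i. inverse (t i))"

lemma nz_tinv: "nz t \<Longrightarrow> nz (tinv t)"
  by (simp add: nz_def tinv_def)

lemma act_tinv1: "nz t \<Longrightarrow> act (tinv t) (act t x) = x"
  by (simp add: nz_def tinv_def act_def mult.assoc[symmetric])

lemma act_tinv2: "nz t \<Longrightarrow> act t (act (tinv t) x) = x"
  by (simp add: nz_def tinv_def act_def mult.assoc[symmetric])

lemma mem_act_image: "nz t \<Longrightarrow> x \<in> act t ` X \<longleftrightarrow> act (tinv t) x \<in> X"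
  by (metis act_tinv1 act_tinv2 image_iff)

lemma act_image_inv: "nz t \<Longrightarrow> act (tinv t) ` (act t ` X) = X"
  by (simp add: image_image act_tinv1)

lemma act_image_inv2: "nz t \<Longrightarrow> act t ` (act (tinv t) ` X) = X"
  by (simp add: image_image act_tinv2)

lemma tinv_tinv: "nz t \<Longrightarrow> tinv (tinv t) = t"
  unfolding tinv_def by simp

lemma inj_act: "nz t \<Longrightarrow> inj (act t)"
  by (metis act_tinv1 injI)

lemma torus_nz: "t \<in> torus k \<Longrightarrow> nz t"
  unfolding torus_def nz_def
proof (intro allI)
  fix i assume h: "t \<in> {g. (\<forall>i. i \<notin> {1..k} \<longrightarrow> g i = 1) \<and> (\<forall>j\<in>{1..k}. g j \<noteq> 0)}"
  show "t i \<noteq> 0"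
  proof (cases "i \<in> {1..k}")
    case True then show ?thesis using h by blast
  next
    case False then have "t i = 1" using h by blast
    then show ?thesis by simp
  qed
qed

lemma mono_eval_act: "mono_eval k \<alpha> (act t x) = mono_eval k \<alpha> t * mono_eval k \<alpha> x"
  unfolding mono_eval_def act_def by (simp add: power_mult_distrib prod.distrib)

lemma mono_eval_nz: "nz t \<Longrightarrow> mono_eval k \<alpha> t \<noteq> 0"
  unfolding mono_eval_def nz_def by simp

lemma poly_eval_act: "nz t \<Longrightarrow>
  poly_eval k p (act t x) = poly_eval k (\<lambda>\<alpha>. p \<alpha> * mono_eval k \<alpha> t) x"
proof -
  assume t: "nz t"
  have "{\<alpha>. p \<alpha> * mono_eval k \<alpha> t \<noteq> 0} = {\<alpha>. p \<alpha> \<noteq> 0}"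
    using mono_eval_nz[OF t] by auto
  then show ?thesis unfolding poly_eval_def
    by (simp add: mono_eval_act mult.assoc)
qed

lemma pspace_act: "nz t \<Longrightarrow> act t x \<in> pspace k \<longleftrightarrow> x \<in> pspace k"
  unfolding pspace_def act_def nz_def by simp

lemma closed_act:
  assumes t: "nz t" and X: "zariski_closed k X"
  shows "zariski_closed k (act t ` X)"
proof -
  obtain P where P: "\<forall>p\<in>P. \<exists>d. hom_poly k d p"
    and Xe: "X = {x \<in> pspace k. \<forall>p\<in>P. poly_eval k p x = 0}"
    using X unfolding zariski_closed_def by blast
  let ?s = "tinv t"
  have s: "nz ?s" using nz_tinv[OF t] .
  define P' where "P' = (\<lambda>p \<alpha>. p \<alpha> * mono_eval k \<alpha> ?s) ` P"
  have "\<forall>p\<in>P'. \<exists>d. hom_poly k d p"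
  proof
    fix p' assume "p' \<in> P'"
    then obtain p where p: "p \<in> P" and pe: "p' = (\<lambda>\<alpha>. p \<alpha> * mono_eval k \<alpha> ?s)"
      unfolding P'_def by blast
    have "{\<alpha>. p' \<alpha> \<noteq> 0} = {\<alpha>. p \<alpha> \<noteq> 0}" using mono_eval_nz[OF s] pe by auto
    moreover obtain d where "hom_poly k d p" using P p by blast
    ultimately have "hom_poly k d p'" unfolding hom_poly_def by (simp only:)
    then show "\<exists>d. hom_poly k d p'" ..
  qed
  moreover have "act t ` X = {x \<in> pspace k. \<forall>p\<in>P'. poly_eval k p x = 0}"
  proof -
    have "x \<in> act t ` X \<longleftrightarrow> x \<in> {x \<in> pspace k. \<forall>p\<in>P'. poly_eval k p x = 0}" for x
    proof -
      have "x \<in> act t ` X \<longleftrightarrow> act ?s x \<in> pspace k \<and> (\<forall>p\<in>P. poly_eval k p (act ?s x) = 0)"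
        unfolding mem_act_image[OF t] Xe by (simp only: mem_Collect_eq)
      also have "\<dots> \<longleftrightarrow> x \<in> pspace k \<and> (\<forall>p\<in>P. poly_eval k (\<lambda>\<alpha>. p \<alpha> * mono_eval k \<alpha> ?s) x = 0)"
        by (simp only: pspace_act[OF s] poly_eval_act[OF s])
      also have "\<dots> \<longleftrightarrow> x \<in> {x \<in> pspace k. \<forall>p\<in>P'. poly_eval k p x = 0}"
        unfolding P'_def by blast
      finally show ?thesis .
    qed
    then show ?thesis by blast
  qed
  ultimately show ?thesis unfolding zariski_closed_def by blast
qed

lemma closure_act:
  assumes t: "nz t"
  shows "zariski_closure k (act t ` S) = act t ` zariski_closure k S"
proof
  let ?s = "tinv t"
  have s: "nz ?s" using nz_tinv[OF t] .
  show "act t ` zariski_closure k S \<subseteq> zariski_closure k (act t ` S)"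
  proof
    fix y assume "y \<in> act t ` zariski_closure k S"
    then obtain x where x: "x \<in> zariski_closure k S" and y: "y = act t x" by blast
    show "y \<in> zariski_closure k (act t ` S)"
      unfolding zariski_closure_def
    proof
      fix X assume "X \<in> {X. zariski_closed k X \<and> act t ` S \<subseteq> X}"
      then have X1: "zariski_closed k X" and X2: "act t ` S \<subseteq> X" by blast+
      have c: "zariski_closed k (act ?s ` X)" using closed_act[OF s X1] .
      have "act ?s ` (act t ` S) \<subseteq> act ?s ` X" using X2 by (rule image_mono)
      then have sub: "S \<subseteq> act ?s ` X" unfolding act_image_inv[OF t] .
      have "x \<in> act ?s ` X" using x c sub unfolding zariski_closure_def by blast
      then have "act (tinv ?s) x \<in> X" unfolding mem_act_image[OF s] .
      then show "y \<in> X" unfolding tinv_tinv[OF t] y .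
    qed
  qed
  show "zariski_closure k (act t ` S) \<subseteq> act t ` zariski_closure k S"
  proof
    fix y assume y: "y \<in> zariski_closure k (act t ` S)"
    have "act ?s y \<in> zariski_closure k S"
      unfolding zariski_closure_def
    proof
      fix X assume "X \<in> {X. zariski_closed k X \<and> S \<subseteq> X}"
      then have X1: "zariski_closed k X" and X2: "S \<subseteq> X" by blast+
      have "zariski_closed k (act t ` X)" using closed_act[OF t X1] .
      moreover have "act t ` S \<subseteq> act t ` X" using X2 by (rule image_mono)
      ultimately have "zariski_closed k (act t ` X)" "act t ` S \<subseteq> act t ` X" by blast+
      then have "y \<in> act t ` X" using y unfolding zariski_closure_def by blast
      then show "act ?s y \<in> X" using mem_act_image[OF t] by blast
    qed
    moreover have "y = act t (act ?s y)" using act_tinv2[OF t] by simp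
    ultimately show "y \<in> act t ` zariski_closure k S" by blast
  qed
qed

lemma irred_act:
  assumes t: "nz t" and X: "zariski_irreducible k X"
  shows "zariski_irreducible k (act t ` X)"
proof -
  let ?s = "tinv t"
  have s: "nz ?s" using nz_tinv[OF t] .
  have "zariski_closed k (act t ` X)" using X closed_act[OF t] unfolding zariski_irreducible_def by blast
  moreover have "act t ` X \<noteq> {}" using X unfolding zariski_irreducible_def by blast
  moreover have "act t ` X = A \<or> act t ` X = B"
    if A: "zariski_closed k A" and B: "zariski_closed k B" and e: "act t ` X = A \<union> B" for A B
  proof -
    have "X = act ?s ` (act t ` X)" using act_image_inv[OF t] by simp
    also have "\<dots> = act ?s ` A \<union> act ?s ` B" unfolding e image_Un ..
    finally have "X = act ?s ` A \<union> act ?s ` B" .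
    then have "X = act ?s ` A \<or> X = act ?s ` B"
      using X closed_act[OF s A] closed_act[OF s B] unfolding zariski_irreducible_def by blast
    then show ?thesis
    proof
      assume "X = act ?s ` A"
      then have "act t ` X = A" using act_image_inv2[OF t, of A] by simp
      then show ?thesis ..
    next
      assume "X = act ?s ` B"
      then have "act t ` X = B" using act_image_inv2[OF t, of B] by simp
      then show ?thesis ..
    qed
  qed
  ultimately show ?thesis unfolding zariski_irreducible_def by blast
qed

lemma dimset_act:
  assumes t: "nz t"
  shows "{m. \<exists>C :: nat \<Rightarrow> (nat \<Rightarrow> complex) set.
       (\<forall>i\<le>m. zariski_irreducible k (C i)) \<and> (\<forall>i<m. C i \<subset> C (Suc i)) \<and> C m \<subseteq> X}
    \<subseteq> {m. \<exists>C :: nat \<Rightarrow> (nat \<Rightarrow> complex) set.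
       (\<forall>i\<le>m. zariski_irreducible k (C i)) \<and> (\<forall>i<m. C i \<subset> C (Suc i)) \<and> C m \<subseteq> act t ` X}"
proof
  fix m assume "m \<in> {m. \<exists>C :: nat \<Rightarrow> (nat \<Rightarrow> complex) set.
       (\<forall>i\<le>m. zariski_irreducible k (C i)) \<and> (\<forall>i<m. C i \<subset> C (Suc i)) \<and> C m \<subseteq> X}"
  then obtain C where C1: "\<forall>i\<le>m. zariski_irreducible k (C i)" and C2: "\<forall>i<m. C i \<subset> C (Suc i)"
    and C3: "C m \<subseteq> X" by blast
  have inj: "inj (act t)" using inj_act[OF t] .
  have "\<forall>i\<le>m. zariski_irreducible k (act t ` C i)"
  proof (intro allI impI)
    fix i assume "i \<le> m"
    then have "zariski_irreducible k (C i)" using C1 by blast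
    then show "zariski_irreducible k (act t ` C i)" by (rule irred_act[OF t])
  qed
  moreover have "\<forall>i<m. act t ` C i \<subset> act t ` C (Suc i)"
  proof (intro allI impI)
    fix i assume "i < m"
    then have "C i \<subset> C (Suc i)" using C2 by blast
    moreover have "act t ` C i = act t ` C (Suc i) \<longleftrightarrow> C i = C (Suc i)"
      using inj_image_eq_iff[OF inj] .
    ultimately show "act t ` C i \<subset> act t ` C (Suc i)" by blast
  qed
  moreover have "act t ` C m \<subseteq> act t ` X" using C3 by (rule image_mono)
  ultimately have "(\<forall>i\<le>m. zariski_irreducible k ((\<lambda>i. act t ` C i) i)) \<and>
     (\<forall>i<m. (\<lambda>i. act t ` C i) i \<subset> (\<lambda>i. act t ` C i) (Suc i)) \<and> (\<lambda>i. act t ` C i) m \<subseteq> act t ` X"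
    by (simp only: conjI)
  then have "\<exists>C :: nat \<Rightarrow> (nat \<Rightarrow> complex) set.
       (\<forall>i\<le>m. zariski_irreducible k (C i)) \<and> (\<forall>i<m. C i \<subset> C (Suc i)) \<and> C m \<subseteq> act t ` X"
    by (rule exI[where x="\<lambda>i. act t ` C i"])
  then show "m \<in> {m. \<exists>C :: nat \<Rightarrow> (nat \<Rightarrow> complex) set.
       (\<forall>i\<le>m. zariski_irreducible k (C i)) \<and> (\<forall>i<m. C i \<subset> C (Suc i)) \<and> C m \<subseteq> act t ` X}"
    by (rule CollectI)
qed

lemma proj_dim_act:
  assumes t: "nz t"
  shows "proj_dim k (act t ` X) = proj_dim k X"
proof -
  have s: "nz (tinv t)" using nz_tinv[OF t] .
  define D where "D = (\<lambda>Y. {m. \<exists>C :: nat \<Rightarrow> (nat \<Rightarrow> complex) set.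
       (\<forall>i\<le>m. zariski_irreducible k (C i)) \<and> (\<forall>i<m. C i \<subset> C (Suc i)) \<and> C m \<subseteq> Y})"
  have 1: "D X \<subseteq> D (act t ` X)" unfolding D_def by (rule dimset_act[OF t])
  have "D (act t ` X) \<subseteq> D (act (tinv t) ` (act t ` X))" unfolding D_def by (rule dimset_act[OF s])
  then have 2: "D (act t ` X) \<subseteq> D X" unfolding act_image_inv[OF t] .
  have "D (act t ` X) = D X" using 1 2 by (rule subset_antisym[rotated])
  have e: "proj_dim k Y = Sup (D Y)" for Y unfolding proj_dim_def D_def ..
  show ?thesis unfolding e using \<open>D (act t ` X) = D X\<close> by (simp only:)
qed

lemma lin_indep_act:
  assumes t: "nz t" and L: "lin_indep_on k X M"
  shows "lin_indep_on k (act t ` X) M"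
  unfolding lin_indep_on_def
proof (intro allI impI)
  fix c assume h: "\<forall>x\<in>act t ` X. (\<Sum>\<alpha>\<in>M. c \<alpha> * mono_eval k \<alpha> x) = 0"
  have "\<forall>x\<in>X. (\<Sum>\<alpha>\<in>M. (c \<alpha> * mono_eval k \<alpha> t) * mono_eval k \<alpha> x) = 0"
    using h by (simp add: mono_eval_act mult.assoc)
  moreover have L': "\<And>c. (\<forall>x\<in>X. (\<Sum>\<alpha>\<in>M. c \<alpha> * mono_eval k \<alpha> x) = 0) \<Longrightarrow> \<forall>\<alpha>\<in>M. c \<alpha> = 0"
    using L unfolding lin_indep_on_def by blast
  ultimately have "\<forall>\<alpha>\<in>M. c \<alpha> * mono_eval k \<alpha> t = 0" using L'[of "\<lambda>\<alpha>. c \<alpha> * mono_eval k \<alpha> t"] by blast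
  then show "\<forall>\<alpha>\<in>M. c \<alpha> = 0" using mono_eval_nz[OF t] by simp
qed

lemma hilbert_act:
  assumes t: "nz t"
  shows "hilbert_function k (act t ` X) d = hilbert_function k X d"
proof -
  have s: "nz (tinv t)" using nz_tinv[OF t] .
  have "lin_indep_on k (act t ` X) M \<longleftrightarrow> lin_indep_on k X M" for M
  proof
    assume "lin_indep_on k (act t ` X) M"
    then have "lin_indep_on k (act (tinv t) ` (act t ` X)) M" by (rule lin_indep_act[OF s])
    then show "lin_indep_on k X M" unfolding act_image_inv[OF t] .
  next
    assume "lin_indep_on k X M"
    then show "lin_indep_on k (act t ` X) M" by (rule lin_indep_act[OF t])
  qed
  then show ?thesis unfolding hilbert_function_def by (simp only:)
qed

lemma degree_act:
  assumes t: "nz t"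
  shows "proj_degree k (act t ` X) = proj_degree k X"
proof -
  have h: "hilbert_function k (act t ` X) = hilbert_function k X"
    by (rule ext, rule hilbert_act[OF t])
  show ?thesis unfolding proj_degree_def proj_dim_act[OF t] h by (rule refl)
qed

lemma act_comm: "act g (act t z) = act t (act g z)"
  unfolding act_def by (rule ext) (simp only: mult.left_commute)

lemma orbit_act:
  assumes t: "t \<in> torus k"
  shows "cox_orbit k u (act t z) = act t ` cox_orbit k u z"
  unfolding cox_orbit_def image_image act_comm ..

lemma preset_act:
  assumes t: "t \<in> torus k"
  shows "{x \<in> pspace k. \<exists>c y. c \<noteq> 0 \<and> y \<in> cox_orbit k u (act t z) \<and> x 0 = c \<and> (\<forall>i\<in>{1..k}. x i = c * y i)}
     = act t ` {x \<in> pspace k. \<exists>c y. c \<noteq> 0 \<and> y \<in> cox_orbit k u z \<and> x 0 = c \<and> (\<forall>i\<in>{1..k}. x i = c * y i)}"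
    (is "?L = act t ` ?R")
proof -
  have n: "nz t" using torus_nz[OF t] .
  have s: "nz (tinv t)" using nz_tinv[OF n] .
  have ti: "tinv t 0 = 1" using t unfolding torus_def tinv_def by auto
  have e1: "x \<in> ?L \<longleftrightarrow> act (tinv t) x \<in> ?R" for x
  proof
    assume "x \<in> ?L"
    then have x1: "x \<in> pspace k" and "\<exists>c y. c \<noteq> 0 \<and> y \<in> cox_orbit k u (act t z) \<and> x 0 = c \<and> (\<forall>i\<in>{1..k}. x i = c * y i)"
      unfolding mem_Collect_eq by (rule conjunct1, rule conjunct2)
    then obtain c y where x2: "c \<noteq> 0" and x3: "y \<in> cox_orbit k u (act t z)" and x4: "x 0 = c"
      and x5: "\<forall>i\<in>{1..k}. x i = c * y i" by blast
    have y1: "act (tinv t) y \<in> cox_orbit k u z"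
      using x3 unfolding orbit_act[OF t] mem_act_image[OF n] .
    have A: "act (tinv t) x \<in> pspace k" unfolding pspace_act[OF s] by (rule x1)
    have y2: "act (tinv t) x 0 = c" using ti x4 by (simp add: act_def)
    have y3: "\<forall>i\<in>{1..k}. act (tinv t) x i = c * act (tinv t) y i"
    proof
      fix i assume "i \<in> {1..k}"
      then have "x i = c * y i" using x5 by blast
      then show "act (tinv t) x i = c * act (tinv t) y i" unfolding act_def by (simp only: mult.left_commute)
    qed
    have "\<exists>c y. c \<noteq> 0 \<and> y \<in> cox_orbit k u z \<and> act (tinv t) x 0 = c \<and>
        (\<forall>i\<in>{1..k}. act (tinv t) x i = c * y i)"
      by (rule exI[where x=c], rule exI[where x="act (tinv t) y"], intro conjI, fact x2, fact y1, fact y2, fact y3)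
    with A show "act (tinv t) x \<in> ?R" unfolding mem_Collect_eq by (rule conjI)
  next
    assume "act (tinv t) x \<in> ?R"
    then have x1: "act (tinv t) x \<in> pspace k" and "\<exists>c y. c \<noteq> 0 \<and> y \<in> cox_orbit k u z \<and> act (tinv t) x 0 = c \<and> (\<forall>i\<in>{1..k}. act (tinv t) x i = c * y i)"
      unfolding mem_Collect_eq by (rule conjunct1, rule conjunct2)
    then obtain c y where x2: "c \<noteq> 0" and x3: "y \<in> cox_orbit k u z" and x4: "act (tinv t) x 0 = c"
      and x5: "\<forall>i\<in>{1..k}. act (tinv t) x i = c * y i" by blast
    have y1: "act t y \<in> cox_orbit k u (act t z)" unfolding orbit_act[OF t] using x3 by (rule imageI)
    have A: "x \<in> pspace k" using x1 unfolding pspace_act[OF s] .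
    have y2: "x 0 = c" using ti x4 by (simp add: act_def)
    have y3: "\<forall>i\<in>{1..k}. x i = c * act t y i"
    proof
      fix i assume i: "i \<in> {1..k}"
      have "x i = act t (act (tinv t) x) i" unfolding act_tinv2[OF n] ..
      also have "\<dots> = t i * act (tinv t) x i" unfolding act_def ..
      also have "\<dots> = t i * (c * y i)" using x5 i by simp
      also have "\<dots> = c * act t y i" unfolding act_def by (simp only: mult.left_commute)
      finally show "x i = c * act t y i" .
    qed
    have "\<exists>c y. c \<noteq> 0 \<and> y \<in> cox_orbit k u (act t z) \<and> x 0 = c \<and>
        (\<forall>i\<in>{1..k}. x i = c * y i)"
      by (rule exI[where x=c], rule exI[where x="act t y"], intro conjI, fact x2, fact y1, fact y2, fact y3)
    with A show "x \<in> ?L" unfolding mem_Collect_eq by (rule conjI)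
  qed
  show ?thesis
  proof (rule set_eqI)
    fix x
    show "x \<in> ?L \<longleftrightarrow> x \<in> act t ` ?R" unfolding e1 mem_act_image[OF n] ..
  qed
qed

lemma orbit_closure_act:
  assumes t: "t \<in> torus k"
  shows "orbit_closure k u (act t z) = act t ` orbit_closure k u z"
proof -
  have "orbit_closure k u (act t z) = zariski_closure k (act t ` {x \<in> pspace k. \<exists>c y. c \<noteq> 0 \<and> y \<in> cox_orbit k u z \<and> x 0 = c \<and> (\<forall>i\<in>{1..k}. x i = c * y i)})"
    unfolding orbit_closure_def by (subst preset_act[OF t], rule refl)
  also have "\<dots> = act t ` zariski_closure k {x \<in> pspace k. \<exists>c y. c \<noteq> 0 \<and> y \<in> cox_orbit k u z \<and> x 0 = c \<and> (\<forall>i\<in>{1..k}. x i = c * y i)}"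
    by (rule closure_act[OF torus_nz[OF t]])
  also have "\<dots> = act t ` orbit_closure k u z" unfolding orbit_closure_def by (rule refl)
  finally show ?thesis .
qed

theorem corollary3p3:
  fixes \<Sigma> :: "(real^'n) set set" and k :: nat and u :: "nat \<Rightarrow> int^'n"
  assumes "complete_fan \<Sigma>"
    and "ray_generators \<Sigma> k u"
  shows "(\<forall>z\<in>cspace k - base_locus \<Sigma> k u. \<forall>t\<in>torus k.
            proj_dim k (orbit_closure k u (act t z)) = proj_dim k (orbit_closure k u z) \<and>
            proj_degree k (orbit_closure k u (act t z)) = proj_degree k (orbit_closure k u z))
       \<and> (\<forall>z\<in>cspace k - base_locus \<Sigma> k u. \<forall>z'\<in>cspace k - base_locus \<Sigma> k u.
            {i. z i \<noteq> 0} = {i. z' i \<noteq> 0} \<longrightarrow>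
            proj_dim k (orbit_closure k u z) = proj_dim k (orbit_closure k u z') \<and>
            proj_degree k (orbit_closure k u z) = proj_degree k (orbit_closure k u z'))"
proof -
  have P1: "proj_dim k (orbit_closure k u (act t z)) = proj_dim k (orbit_closure k u z) \<and>
            proj_degree k (orbit_closure k u (act t z)) = proj_degree k (orbit_closure k u z)"
    if t: "t \<in> torus k" for t z
    unfolding orbit_closure_act[OF t] proj_dim_act[OF torus_nz[OF t]] degree_act[OF torus_nz[OF t]]
    by (rule conjI refl)+
  moreover have "proj_dim k (orbit_closure k u z) = proj_dim k (orbit_closure k u z') \<and>
            proj_degree k (orbit_closure k u z) = proj_degree k (orbit_closure k u z')"
    if z: "z \<in> cspace k" and z': "z' \<in> cspace k" and e: "{i. z i \<noteq> 0} = {i. z' i \<noteq> 0}" for z z'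
  proof -
    define t where "t = (\<lambda>i. if i \<in> {1..k} \<and> z i \<noteq> 0 then z' i / z i else 1)"
    have tt: "t \<in> torus k" unfolding torus_def t_def using e by auto
    have "act t z = z'"
    proof
      fix i
      show "act t z i = z' i"
      proof (cases "i \<in> {1..k}")
        case True then show ?thesis using e unfolding act_def t_def by (cases "z i = 0") auto
      next
        case False then show ?thesis using z z' unfolding act_def t_def cspace_def by auto
      qed
    qed
    then show ?thesis using P1[OF tt, of z] by simp
  qed
  ultimately show ?thesis by blast
qed

end
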